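(* Let $\mathcal{X},\mathcal{A}$ be finite sets and $P_{A|X}$ a channel. There is a function $\varepsilon(n)\to0$ as $n\to\infty$ (depending only on $|\mathcal{X}|,|\mathcal{A}|$) such that for every $n$ and every list-decoding $(n,2^{nR},2^{nR_L},2^{-n\zeta})$-code for $P_{A|X}$, $$\zeta\ge\min_{Q_{XA}}\Big(D(Q_{A|X}\|P_{A|X}\mid Q_X)+\max\{R-R_L-I(X;A)_Q,\,0\}\Big)-\varepsilon(n),$$ the minimum being over probability distributions $Q_{XA}$ on $\mathcal{X}\times\mathcal{A}$.
   Context: Logarithms are base $2$; $[N]=\{0,\dots,N-1\}$; $P^{\times n}_{A|X}(a^n|x^n)=\prod_i P_{A|X}(a_i|x_i)$. A list-decoding $(n,2^{nR},L,\alpha)$-code consists of $\mathrm{Enc}\colon[2^{nR}]\to\mathcal{X}^n$ and a decoder assigning to each $a^n\in\mathcal{A}^n$ a subset $C_{a^n}\subseteq[2^{nR}]$ of size $L$, such that for all $m\in[2^{nR}]$, $\sum_{a^n: C_{a^n}\ni m}P^{\times n}_{A|X}(a^n|\mathrm{Enc}(m))\ge\alpha$. $I(X;A)_Q=H(X)_Q+H(A)_Q-H(X,A)_Q$; $D(Q_{A|X}\|P_{A|X}\mid Q_X)=\sum_x Q_X(x)\sum_a Q_{A|X}(a|x)\log\frac{Q_{A|X}(a|x)}{P_{A|X}(a|x)}$. *)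

theory Defs
  imports "HOL-Analysis.Analysis"
begin

definition channel :: "('x::finite \<Rightarrow> 'a::finite \<Rightarrow> real) \<Rightarrow> bool" where
  "channel P \<longleftrightarrow> (\<forall>x a. 0 \<le> P x a) \<and> (\<forall>x. (\<Sum>a\<in>UNIV. P x a) = 1)"

definition joint_dist :: "('x::finite \<Rightarrow> 'a::finite \<Rightarrow> real) \<Rightarrow> bool" where
  "joint_dist Q \<longleftrightarrow> (\<forall>x a. 0 \<le> Q x a) \<and> (\<Sum>x\<in>UNIV. \<Sum>a\<in>UNIV. Q x a) = 1"

definition marg_X :: "('x::finite \<Rightarrow> 'a::finite \<Rightarrow> real) \<Rightarrow> 'x \<Rightarrow> real" where
  "marg_X Q x = (\<Sum>a\<in>UNIV. Q x a)"

definition marg_A :: "('x::finite \<Rightarrow> 'a::finite \<Rightarrow> real) \<Rightarrow> 'a \<Rightarrow> real" where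
  "marg_A Q a = (\<Sum>x\<in>UNIV. Q x a)"

definition entropy2 :: "('b::finite \<Rightarrow> real) \<Rightarrow> real" where
  "entropy2 p = - (\<Sum>s\<in>UNIV. if p s = 0 then 0 else p s * log 2 (p s))"

definition mutual_info :: "('x::finite \<Rightarrow> 'a::finite \<Rightarrow> real) \<Rightarrow> real" where
  "mutual_info Q = entropy2 (marg_X Q) + entropy2 (marg_A Q) - entropy2 (\<lambda>(x, a). Q x a)"

text \<open>Conditional divergence D(Q_{A|X} || P_{A|X} | Q_X), with the conventions
  0 log(0/q) = 0 and c log(c/0) = +infinity for c > 0; terms with Q_X(x) = 0 contribute 0.\<close>
definition cond_div :: "('x::finite \<Rightarrow> 'a::finite \<Rightarrow> real) \<Rightarrow> ('x \<Rightarrow> 'a \<Rightarrow> real) \<Rightarrow> ereal" where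
  "cond_div Q P = (\<Sum>x\<in>UNIV. \<Sum>a\<in>UNIV.
     (let qx = marg_X Q x; qc = Q x a / qx in
      if qx = 0 \<or> qc = 0 then 0
      else if P x a = 0 then \<infinity>
      else ereal (qx * (qc * log 2 (qc / P x a)))))"

text \<open>List-decoding (n, M, L, alpha)-code: messages are {0..<M}; codewords and channel
  outputs are lists of length n.\<close>
definition list_code :: "('x::finite \<Rightarrow> 'a::finite \<Rightarrow> real) \<Rightarrow> nat \<Rightarrow> nat \<Rightarrow> nat \<Rightarrow> real
    \<Rightarrow> (nat \<Rightarrow> 'x list) \<Rightarrow> ('a list \<Rightarrow> nat set) \<Rightarrow> bool" where
  "list_code P n M L \<alpha> enc dec \<longleftrightarrow>
     (\<forall>m<M. length (enc m) = n) \<and>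
     (\<forall>as. length as = n \<longrightarrow> dec as \<subseteq> {..<M} \<and> card (dec as) = L) \<and>
     (\<forall>m<M. \<alpha> \<le> (\<Sum>as\<in>{as. length as = n \<and> m \<in> dec as}. \<Prod>i<n. P (enc m ! i) (as ! i)))"

end

theory Submission
  imports Defs "HOL-Real_Asymp.Real_Asymp"
begin


lemma prod_fiber:
  fixes g :: "'i \<Rightarrow> 'b::finite" and h :: "'b \<Rightarrow> real"
  assumes "finite I"
  shows "(\<Prod>i\<in>I. h (g i)) = (\<Prod>y\<in>UNIV. h y ^ card {i\<in>I. g i = y})"
proof -
  have "(\<Prod>i\<in>I. h (g i)) = (\<Prod>y\<in>UNIV. \<Prod>i\<in>{i. i\<in>I \<and> g i = y}. h (g i))"
    using prod.group[of I UNIV g "\<lambda>i. h (g i)"] assms by simp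
  also have "\<dots> = (\<Prod>y\<in>UNIV. h y ^ card {i\<in>I. g i = y})"
    by (rule prod.cong) (auto intro: prod.cong)
  finally show ?thesis .
qed

lemma sum_fiber_card:
  fixes g :: "'i \<Rightarrow> 'b::finite"
  assumes "finite I"
  shows "(\<Sum>y\<in>UNIV. card {i\<in>I. g i = y}) = card I"
  using sum.group[of I UNIV g "\<lambda>i. 1::nat"] assms by simp

lemma lists_finite: "finite {as::'a::finite list. length as = n}"
  using finite_lists_length_eq[of "UNIV::'a set" n] by simp

lemma sum_lists_prod:
  fixes f :: "nat \<Rightarrow> 'a::finite \<Rightarrow> real"
  shows "(\<Sum>as\<in>{as. length as = n}. \<Prod>i<n. f i (as!i)) = (\<Prod>i<n. \<Sum>a\<in>UNIV. f i a)"
proof (induction n arbitrary: f)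
  case 0
  then show ?case by simp
next
  case (Suc n)
  have eq: "{as::'a list. length as = Suc n} = (\<lambda>(a,as). a # as) ` (UNIV \<times> {as. length as = n})"
    by (auto simp: length_Suc_conv image_iff)
  have inj: "inj_on (\<lambda>(a,as). a # (as::'a list)) (UNIV \<times> {as. length as = n})"
    by (auto simp: inj_on_def)
  have "(\<Sum>as\<in>{as. length as = Suc n}. \<Prod>i<Suc n. f i (as!i))
      = (\<Sum>(a,as)\<in>UNIV \<times> {as. length as = n}. \<Prod>i<Suc n. f i ((a#as)!i))"
    unfolding eq by (subst sum.reindex[OF inj]) (simp add: case_prod_unfold)
  also have "\<dots> = (\<Sum>a\<in>UNIV. \<Sum>as\<in>{as. length as = n}. f 0 a * (\<Prod>i<n. f (Suc i) (as!i)))"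
    by (simp add: sum.cartesian_product prod.lessThan_Suc_shift del: prod.lessThan_Suc)
  also have "\<dots> = (\<Sum>a\<in>UNIV. f 0 a * (\<Prod>i<n. \<Sum>b\<in>UNIV. f (Suc i) b))"
    using Suc.IH[of "\<lambda>i. f (Suc i)"] by (simp add: sum_distrib_left[symmetric])
  also have "\<dots> = (\<Prod>i<Suc n. \<Sum>a\<in>UNIV. f i a)"
    by (simp add: prod.lessThan_Suc_shift sum_distrib_right del: prod.lessThan_Suc)
  finally show ?case .
qed

lemma count_bound:
  fixes f :: "nat \<Rightarrow> 'a::finite \<Rightarrow> real"
  assumes nn: "\<And>i a. i < n \<Longrightarrow> 0 \<le> f i a"
    and s1: "\<And>i. i < n \<Longrightarrow> (\<Sum>a\<in>UNIV. f i a) = 1"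
    and C: "C \<subseteq> {as. length as = n}"
    and c: "\<And>as. as \<in> C \<Longrightarrow> (\<Prod>i<n. f i (as!i)) = c"
  shows "real (card C) * c \<le> 1"
proof -
  have fC: "finite C" using C lists_finite finite_subset by blast
  have "real (card C) * c = (\<Sum>as\<in>C. \<Prod>i<n. f i (as!i))" using c by simp
  also have "\<dots> \<le> (\<Sum>as\<in>{as. length as = n}. \<Prod>i<n. f i (as!i))"
    by (rule sum_mono2[OF lists_finite C]) (auto intro!: prod_nonneg nn)
  also have "\<dots> = 1" using s1 by (simp add: sum_lists_prod)
  finally show ?thesis .
qed

lemma prod_powr:
  fixes W :: "'b::finite \<Rightarrow> real" and N :: "'b \<Rightarrow> nat"
  assumes "\<And>s. N s > 0 \<Longrightarrow> W s > 0"
  shows "(\<Prod>s\<in>UNIV. W s ^ N s) = 2 powr (\<Sum>s\<in>UNIV. real (N s) * log 2 (W s))"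
  apply (subst powr_sum, simp)
proof (rule prod.cong[OF refl])
  fix s
  show "W s ^ N s = 2 powr (real (N s) * log 2 (W s))"
  proof (cases "N s = 0")
    case False
    then have "W s > 0" using assms by simp
    have "2 powr (real (N s) * log 2 (W s)) = (2 powr log 2 (W s)) powr (real (N s))"
      by (simp add: powr_powr mult.commute)
    also have "\<dots> = W s powr real (N s)" using \<open>W s > 0\<close> by simp
    also have "\<dots> = W s ^ N s" using \<open>W s > 0\<close> by (simp add: powr_realpow)
    finally show ?thesis by simp
  qed simp
qed

lemma entropy_counts:
  fixes K :: "'b::finite \<Rightarrow> nat"
  assumes "n > 0"
  shows "real n * entropy2 (\<lambda>s. real (K s) / real n) = - (\<Sum>s\<in>UNIV. real (K s) * log 2 (real (K s) / real n))"
  unfolding entropy2_def using assms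
  by (auto simp add: sum_distrib_left sum_negf intro!: sum.cong)

lemma sum_pair: "(\<Sum>s\<in>(UNIV::('x::finite\<times>'a::finite) set). f s) = (\<Sum>x\<in>UNIV. \<Sum>a\<in>UNIV. f (x,a))"
  using sum.cartesian_product[of "\<lambda>x a. f (x,a)" UNIV UNIV] by (simp only: UNIV_Times_UNIV case_prod_eta)


definition cnt :: "nat \<Rightarrow> 'x list \<Rightarrow> 'a list \<Rightarrow> ('x \<times> 'a) \<Rightarrow> nat" where
  "cnt n xs as s = card {i\<in>{..<n}. (xs!i, as!i) = s}"

definition NX :: "('x::finite \<times> 'a::finite \<Rightarrow> nat) \<Rightarrow> 'x \<Rightarrow> nat" where
  "NX N x = (\<Sum>a\<in>UNIV. N (x,a))"

definition NA :: "('x::finite \<times> 'a::finite \<Rightarrow> nat) \<Rightarrow> 'a \<Rightarrow> nat" where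
  "NA N a = (\<Sum>x\<in>UNIV. N (x,a))"

lemma cnt_sum: "(\<Sum>s\<in>UNIV. cnt n (xs::'x::finite list) (as::'a::finite list) s) = n"
  unfolding cnt_def using sum_fiber_card[of "{..<n}" "\<lambda>i. (xs!i, as!i)"] by simp

lemma cnt_le: "cnt n xs as s \<le> n"
  unfolding cnt_def by (rule order.trans[OF card_mono[of "{..<n}"]]) auto

lemma le_NX: "N (x,a) \<le> NX N x"
  unfolding NX_def by (rule member_le_sum) auto

lemma cnt_pos: "i < n \<Longrightarrow> cnt n xs as (xs!i, as!i) > 0"
  unfolding cnt_def by (subst card_gt_0_iff) auto

lemma cntA: "card {i\<in>{..<n}. as!i = b} = NA (cnt n (xs::'x::finite list) (as::'a::finite list)) b"
proof -
  have "NA (cnt n xs as) b = (\<Sum>x\<in>UNIV. card {i\<in>{i\<in>{..<n}. as!i = b}. xs!i = x})"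
    unfolding NA_def cnt_def by (intro sum.cong refl arg_cong[where f=card]) auto
  also have "\<dots> = card {i\<in>{..<n}. as!i = b}"
    by (rule sum_fiber_card) simp
  finally show ?thesis by simp
qed

lemma classX_bound:
  fixes xs :: "'x::finite list" and N :: "'x \<times> 'a::finite \<Rightarrow> nat"
  shows "real (card {as::'a list. length as = n \<and> cnt n xs as = N})
     * 2 powr (\<Sum>s\<in>UNIV. real (N s) * log 2 (real (N s) / real (NX N (fst s)))) \<le> 1"
proof (cases "{as::'a list. length as = n \<and> cnt n xs as = N} = {}")
  case True
  show ?thesis unfolding True by simp
next
  case False
  then obtain as0 where as0: "length as0 = n" "cnt n xs as0 = N" by auto
  define f where "f i a = real (N (xs!i, a)) / real (NX N (xs!i))" for i a
  define W where "W s = real (N s) / real (NX N (fst s))" for s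
  have NXpos: "NX N (xs!i) > 0" if "i < n" for i
    using cnt_pos[OF that, of xs as0] as0(2) le_NX[of N "xs!i" "as0!i"] by simp
  show ?thesis
  proof (rule count_bound[of n f])
    show "0 \<le> f i a" for i a unfolding f_def by simp
    show "(\<Sum>a\<in>UNIV. f i a) = 1" if "i < n" for i
    proof -
      have "(\<Sum>a\<in>UNIV. f i a) = (\<Sum>a\<in>UNIV. real (N (xs!i,a))) / real (NX N (xs!i))"
        by (simp add: f_def sum_divide_distrib)
      also have "(\<Sum>a\<in>UNIV. real (N (xs!i,a))) = real (NX N (xs!i))" by (simp add: NX_def)
      finally show ?thesis using NXpos[OF that] by simp
    qed
    show "{as. length as = n \<and> cnt n xs as = N} \<subseteq> {as. length as = n}" by auto
    fix as assume "as \<in> {as. length as = n \<and> cnt n xs as = N}"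
    then have as: "cnt n xs as = N" by auto
    have "(\<Prod>i<n. f i (as!i)) = (\<Prod>i<n. W (xs!i, as!i))"
      unfolding f_def W_def by simp
    also have "\<dots> = (\<Prod>s\<in>UNIV. W s ^ card {i\<in>{..<n}. (xs!i, as!i) = s})"
      by (rule prod_fiber) simp
    also have "\<dots> = (\<Prod>s\<in>UNIV. W s ^ N s)"
      by (simp add: as[symmetric] cnt_def)
    also have "\<dots> = 2 powr (\<Sum>s\<in>UNIV. real (N s) * log 2 (W s))"
    proof (rule prod_powr)
      fix s assume "N s > 0"
      moreover have "N s \<le> NX N (fst s)" using le_NX[of N "fst s" "snd s"] by simp
      ultimately show "W s > 0" unfolding W_def by simp
    qed
    finally show "(\<Prod>i<n. f i (as!i)) = 2 powr (\<Sum>s\<in>UNIV. real (N s) * log 2 (real (N s) / real (NX N (fst s))))"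
      unfolding W_def .
  qed
qed

lemma classA_bound:
  fixes K :: "'a::finite \<Rightarrow> nat"
  assumes n: "n > 0" and K: "(\<Sum>b\<in>UNIV. K b) = n"
  shows "real (card {as::'a list. length as = n \<and> (\<forall>b. card {i\<in>{..<n}. as!i = b} = K b)})
     * 2 powr (\<Sum>b\<in>UNIV. real (K b) * log 2 (real (K b) / real n)) \<le> 1"
proof (rule count_bound[of n "\<lambda>i b. real (K b) / real n"])
  show "0 \<le> real (K b) / real n" for b by simp
  show "(\<Sum>b\<in>UNIV. real (K b) / real n) = 1"
    using n K by (simp add: sum_divide_distrib[symmetric] of_nat_sum[symmetric] del: of_nat_sum)
  show "{as. length as = n \<and> (\<forall>b. card {i\<in>{..<n}. as!i = b} = K b)} \<subseteq> {as. length as = n}" by auto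
  fix as assume "as \<in> {as::'a list. length as = n \<and> (\<forall>b. card {i\<in>{..<n}. as!i = b} = K b)}"
  then have as: "\<And>b. card {i\<in>{..<n}. as!i = b} = K b" by auto
  have "(\<Prod>i<n. real (K (as!i)) / real n) = (\<Prod>b\<in>UNIV. (real (K b) / real n) ^ card {i\<in>{..<n}. as!i = b})"
    by (rule prod_fiber[where h="\<lambda>b. real (K b) / real n"]) simp
  also have "\<dots> = (\<Prod>b\<in>UNIV. (real (K b) / real n) ^ K b)" using as by simp
  also have "\<dots> = 2 powr (\<Sum>b\<in>UNIV. real (K b) * log 2 (real (K b) / real n))"
    by (rule prod_powr) (use n in simp)
  finally show "(\<Prod>i<n. real (K (as!i)) / real n) = 2 powr (\<Sum>b\<in>UNIV. real (K b) * log 2 (real (K b) / real n))" .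
qed


lemma margX_V: "marg_X (\<lambda>x a. real (N (x,a)) / real n) = (\<lambda>x. real (NX N x) / real n)"
  unfolding marg_X_def NX_def by (simp add: sum_divide_distrib[symmetric])

lemma margA_V: "marg_A (\<lambda>x a. real (N (x,a)) / real n) = (\<lambda>a. real (NA N a) / real n)"
  unfolding marg_A_def NA_def by (simp add: sum_divide_distrib[symmetric])

lemma cond_div_V:
  fixes N :: "'x::finite \<times> 'a::finite \<Rightarrow> nat" and P :: "'x \<Rightarrow> 'a \<Rightarrow> real"
  assumes n: "n > 0" and PN: "\<And>x a. N (x,a) > 0 \<Longrightarrow> P x a > 0"
  shows "cond_div (\<lambda>x a. real (N (x,a)) / real n) P =
    ereal ((\<Sum>s\<in>UNIV. real (N s) * (log 2 (real (N s) / real (NX N (fst s))) - log 2 (P (fst s) (snd s)))) / real n)"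
proof -
  have trm: "(let qx = marg_X (\<lambda>x a. real (N (x,a)) / real n) x;
        qc = real (N (x,a)) / real n / qx in
      if qx = 0 \<or> qc = 0 then 0
      else if P x a = 0 then \<infinity>
      else ereal (qx * (qc * log 2 (qc / P x a))))
    = ereal (real (N (x,a)) * (log 2 (real (N (x,a)) / real (NX N x)) - log 2 (P x a)) / real n)" for x a
  proof (cases "N (x,a) = 0")
    case True
    then show ?thesis by (simp add: Let_def)
  next
    case False
    have le: "N (x,a) \<le> NX N x" by (rule le_NX)
    with False have NXp: "NX N x > 0" by simp
    have Pp: "P x a > 0" using PN False by simp
    have "log 2 (real (N (x,a)) / real (NX N x) / P x a) = log 2 (real (N (x,a)) / real (NX N x)) - log 2 (P x a)"
      using False NXp Pp by (intro log_divide_pos) simp_all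
    note l = this
    have q: "real (N (x,a)) / real n / (real (NX N x) / real n) = real (N (x,a)) / real (NX N x)"
      using n by simp
    have ar: "real (NX N x) / real n * (real (N (x,a)) / real (NX N x) * L) = real (N (x,a)) * L / real n" for L
      using NXp by (simp add: field_simps)
    have c1: "\<not> (real (NX N x) / real n = 0 \<or> real (N (x,a)) / real (NX N x) = 0)"
      using NXp False n by simp
    have c2: "P x a \<noteq> 0" using Pp by simp
    show ?thesis
      apply (simp only: Let_def margX_V q)
      apply (simp only: if_not_P[OF c1] if_not_P[OF c2] l ar)
      done
  qed
  show ?thesis
    unfolding cond_div_def trm sum_ereal
    by (subst sum_pair[where f="\<lambda>s. real (N s) * (log 2 (real (N s) / real (NX N (fst s))) - log 2 (P (fst s) (snd s)))"]) (simp only: sum_divide_distrib fst_conv snd_conv)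
qed


lemma mi_V:
  fixes N :: "'x::finite \<times> 'a::finite \<Rightarrow> nat"
  assumes n: "n > 0"
  shows "real n * mutual_info (\<lambda>x a. real (N (x,a)) / real n) =
    (\<Sum>s\<in>UNIV. real (N s) * log 2 (real (N s) / real (NX N (fst s))))
    - (\<Sum>b\<in>UNIV. real (NA N b) * log 2 (real (NA N b) / real n))"
proof -
  have j: "(\<lambda>(x,a). real (N (x,a)) / real n) = (\<lambda>s. real (N s) / real n)" by auto
  have hx: "real n * entropy2 (\<lambda>x. real (NX N x) / real n) = - (\<Sum>x\<in>UNIV. real (NX N x) * log 2 (real (NX N x) / real n))"
    by (rule entropy_counts[OF n])
  have ha: "real n * entropy2 (\<lambda>b. real (NA N b) / real n) = - (\<Sum>b\<in>UNIV. real (NA N b) * log 2 (real (NA N b) / real n))"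
    by (rule entropy_counts[OF n])
  have hxa: "real n * entropy2 (\<lambda>s. real (N s) / real n) = - (\<Sum>s\<in>UNIV. real (N s) * log 2 (real (N s) / real n))"
    by (rule entropy_counts[OF n])
  have lw: "(\<Sum>s\<in>UNIV. real (N s) * log 2 (real (N s) / real (NX N (fst s))))
     = (\<Sum>s\<in>UNIV. real (N s) * log 2 (real (N s) / real n)) - (\<Sum>s\<in>UNIV. real (N s) * log 2 (real (NX N (fst s)) / real n))"
    unfolding sum_subtractf[symmetric]
  proof (rule sum.cong[OF refl])
    fix s
    show "real (N s) * log 2 (real (N s) / real (NX N (fst s))) =
          real (N s) * log 2 (real (N s) / real n) - real (N s) * log 2 (real (NX N (fst s)) / real n)"
    proof (cases "N s = 0")
      case False
      have "N s \<le> NX N (fst s)" using le_NX[of N "fst s" "snd s"] by simp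
      with False have "NX N (fst s) > 0" by simp
      then have p: "real (NX N (fst s)) > 0" "real (N s) > 0" "real n > 0" using False n by simp_all
      have e1: "log 2 (real (N s) / real (NX N (fst s))) = log 2 (real (N s)) - log 2 (real (NX N (fst s)))"
        using p by (intro log_divide_pos) simp_all
      have e2: "log 2 (real (N s) / real n) = log 2 (real (N s)) - log 2 (real n)"
        using p by (intro log_divide_pos) simp_all
      have e3: "log 2 (real (NX N (fst s)) / real n) = log 2 (real (NX N (fst s))) - log 2 (real n)"
        using p by (intro log_divide_pos) simp_all
      show ?thesis unfolding e1 e2 e3 right_diff_distrib by linarith
    qed simp
  qed
  have g: "(\<Sum>s\<in>UNIV. real (N s) * log 2 (real (NX N (fst s)) / real n))
     = (\<Sum>x\<in>UNIV. real (NX N x) * log 2 (real (NX N x) / real n))"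
  proof -
    have "(\<Sum>s\<in>UNIV. real (N s) * log 2 (real (NX N (fst s)) / real n))
      = (\<Sum>x\<in>UNIV. \<Sum>a\<in>UNIV. real (N (x,a)) * log 2 (real (NX N x) / real n))"
      by (subst sum_pair) (simp only: fst_conv)
    also have "\<dots> = (\<Sum>x\<in>UNIV. real (NX N x) * log 2 (real (NX N x) / real n))"
    proof (rule sum.cong[OF refl])
      fix x
      show "(\<Sum>a\<in>UNIV. real (N (x,a)) * log 2 (real (NX N x) / real n)) = real (NX N x) * log 2 (real (NX N x) / real n)"
      proof -
        have r: "real (NX N x) = (\<Sum>a\<in>UNIV. real (N (x,a)))" by (simp add: NX_def)
        show ?thesis unfolding sum_distrib_right[symmetric] by (simp only: r)
      qed
    qed
    finally show ?thesis .
  qed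
  show ?thesis
    unfolding mutual_info_def margX_V margA_V j right_diff_distrib distrib_left hx ha hxa lw g
    by linarith
qed



lemma ereal_neg_aux: "\<not> (X - ereal e \<le> ereal z) \<Longrightarrow> ereal (z + e) < X"
  by (cases X) auto

lemma pw_lemma:
  fixes x :: real assumes "x > 0" shows "2 powr (real k * log 2 x) = x ^ k"
proof -
  have "x ^ k = x powr real k" using assms by (simp add: powr_realpow)
  also have "\<dots> = (2 powr log 2 x) powr real k" using assms by simp
  also have "\<dots> = 2 powr (log 2 x * real k)" by (rule powr_powr)
  finally show ?thesis by (simp add: mult.commute)
qed

lemma main_bound:
  fixes P :: "'x::finite \<Rightarrow> 'a::finite \<Rightarrow> real"
  assumes chan: "channel P" and n1: "1 \<le> n"
    and MR: "real M = 2 powr (real n * R)" and LR: "real L = 2 powr (real n * RL)"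
    and code: "list_code P n M L (2 powr (- (real n * \<zeta>))) enc dec"
  shows "(INF Q\<in>{Q. joint_dist Q}. cond_div Q P + ereal (max (R - RL - mutual_info Q) 0))
          - ereal (real CARD('x \<times> 'a) * log 2 (real n + 1) / real n) \<le> ereal \<zeta>"
proof (rule ccontr)
  define \<alpha> where "\<alpha> = 2 powr (- (real n * \<zeta>))"
  define e where "e = real CARD('x \<times> 'a) * log 2 (real n + 1) / real n"
  define F where "F Q = cond_div Q P + ereal (max (R - RL - mutual_info Q) 0)" for Q :: "'x \<Rightarrow> 'a \<Rightarrow> real"
  assume neg: "\<not> ?thesis"
  have n: "n > 0" using n1 by simp
  have low: "ereal (\<zeta> + e) < F Q" if "joint_dist Q" for Q
  proof -
    have "ereal (\<zeta> + e) < (INF Q\<in>{Q. joint_dist Q}. F Q)"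
      using ereal_neg_aux neg unfolding F_def e_def by blast
    also have "\<dots> \<le> F Q" using that by (intro INF_lower) simp
    finally show ?thesis .
  qed
  have Pnn: "\<And>x a. 0 \<le> P x a" using chan unfolding channel_def by simp
  have len: "\<And>m. m < M \<Longrightarrow> length (enc m) = n"
    and decp: "\<And>as. length as = n \<Longrightarrow> dec as \<subseteq> {..<M} \<and> card (dec as) = L"
    and succ: "\<And>m. m < M \<Longrightarrow> \<alpha> \<le> (\<Sum>as\<in>{as. length as = n \<and> m \<in> dec as}. \<Prod>i<n. P (enc m ! i) (as ! i))"
    using code unfolding list_code_def \<alpha>_def by auto
  have Mpos: "real M > 0" using MR by simp
  define Pn where "Pn = (\<lambda>(m::nat, as::'a list). \<Prod>i<n. P (enc m ! i) (as ! i))"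
  define S where "S = Sigma {..<M} (\<lambda>m. {as::'a list. length as = n \<and> m \<in> dec as})"
  have finL: "finite {as::'a list. length as = n \<and> m \<in> dec as}" for m
    by (rule finite_subset[OF _ lists_finite[of n]]) auto
  have finS: "finite S" unfolding S_def using finL by (intro finite_SigmaI) auto
  have step1: "real M * \<alpha> \<le> sum Pn S"
  proof -
    have "real M * \<alpha> = (\<Sum>m<M. \<alpha>)" by simp
    also have "\<dots> \<le> (\<Sum>m<M. \<Sum>as\<in>{as. length as = n \<and> m \<in> dec as}. \<Prod>i<n. P (enc m ! i) (as ! i))"
      by (rule sum_mono) (rule succ, simp)
    also have "\<dots> = sum Pn S"
      unfolding S_def Pn_def using finL by (subst sum.Sigma) auto
    finally show ?thesis .
  qed
  define NS where "NS = (PiE UNIV (\<lambda>_. {..n}) :: ('x \<times> 'a \<Rightarrow> nat) set)"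
  define g where "g = (\<lambda>(m::nat, as::'a list). cnt n (enc m) as)"
  have finNS: "finite NS" unfolding NS_def by (intro finite_PiE) auto
  have cardNS: "card NS = (n+1) ^ CARD('x \<times> 'a)" unfolding NS_def by (simp add: card_PiE)
  have NSne: "NS \<noteq> {}" unfolding NS_def by (auto simp: PiE_eq_empty_iff)
  have gS: "g ` S \<subseteq> NS" unfolding NS_def g_def using cnt_le by (auto simp: PiE_UNIV_domain)
  have step2: "sum Pn S = (\<Sum>N\<in>NS. sum Pn {p\<in>S. g p = N})"
    using sum.group[OF finS finNS gS, of Pn] by simp
  define B where "B = real M * 2 powr (- (real n * (\<zeta> + e)))"
  have Bpos: "B > 0" unfolding B_def using Mpos by simp
  have step3: "sum Pn {p\<in>S. g p = N} < B" if NNS: "N \<in> NS" for N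
  proof -
    define SN where "SN = {p\<in>S. g p = N}"
    show ?thesis
    proof (cases "SN = {}")
      case True
      show ?thesis using Bpos by (simp only: SN_def[symmetric] True sum.empty)
    next
      case False
      then obtain m0 as0 where p0: "(m0, as0) \<in> SN" by auto
      then have m0: "m0 < M" "length as0 = n" "cnt n (enc m0) as0 = N"
        unfolding SN_def S_def g_def by auto
      have sumN: "(\<Sum>s\<in>UNIV. N s) = n" using cnt_sum[of n "enc m0" as0] m0(3) by simp
      have finSN: "finite SN" unfolding SN_def using finS by simp
      define pN where "pN = (\<Prod>s\<in>UNIV. (case_prod P s) ^ N s)"
      have PnN: "Pn p = pN" if "p \<in> SN" for p
      proof -
        obtain m as where p: "p = (m, as)" by (cases p)
        have c: "cnt n (enc m) as = N" using that unfolding p SN_def g_def by simp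
        have "Pn p = (\<Prod>i<n. case_prod P (enc m ! i, as ! i))" unfolding p Pn_def by simp
        also have "\<dots> = (\<Prod>s\<in>UNIV. (case_prod P s) ^ card {i\<in>{..<n}. (enc m ! i, as ! i) = s})"
          by (rule prod_fiber) simp
        also have "\<dots> = pN" unfolding pN_def by (simp add: c[symmetric] cnt_def)
        finally show ?thesis .
      qed
      have sumSN: "sum Pn SN = real (card SN) * pN" using PnN by simp
      show ?thesis
      proof (cases "\<exists>s. N s > 0 \<and> case_prod P s = 0")
        case True
        then obtain x a where s: "N (x,a) > 0" "P x a = 0" by auto
        have "pN = 0" unfolding pN_def using s by (intro prod_zero) (auto intro!: bexI[of _ "(x,a)"])
        then show ?thesis using sumSN Bpos unfolding SN_def by simp
      next
        case False
        then have PN: "\<And>x a. N (x,a) > 0 \<Longrightarrow> P x a > 0"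
          using Pnn by (metis case_prod_conv order_le_less)
        define lp where "lp = (\<Sum>s\<in>UNIV. real (N s) * log 2 (case_prod P s))"
        define lw where "lw = (\<Sum>s\<in>UNIV. real (N s) * log 2 (real (N s) / real (NX N (fst s))))"
        define lu where "lu = (\<Sum>b\<in>UNIV. real (NA N b) * log 2 (real (NA N b) / real n))"
        have pN: "pN = 2 powr lp" unfolding pN_def lp_def
          by (rule prod_powr) (use PN in auto)
        have bound1: "real (card SN) \<le> real M / 2 powr lw"
        proof -
          define cl where "cl m = {as::'a list. length as = n \<and> cnt n (enc m) as = N}" for m
          have fcl: "finite (cl m)" for m unfolding cl_def
            by (rule finite_subset[OF _ lists_finite[of n]]) auto
          have "SN \<subseteq> Sigma {..<M} cl" unfolding SN_def S_def g_def cl_def by auto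
          then have "card SN \<le> card (Sigma {..<M} cl)"
            by (intro card_mono) (use fcl in auto)
          also have "\<dots> = (\<Sum>m<M. card (cl m))" using fcl by simp
          finally have "real (card SN) \<le> (\<Sum>m<M. real (card (cl m)))"
            by (simp add: of_nat_sum[symmetric] del: of_nat_sum)
          also have "\<dots> \<le> (\<Sum>m<M. 1 / 2 powr lw)"
          proof (rule sum_mono)
            fix m
            have "real (card (cl m)) * 2 powr lw \<le> 1" unfolding cl_def lw_def by (rule classX_bound)
            then show "real (card (cl m)) \<le> 1 / 2 powr lw" by (simp add: field_simps)
          qed
          also have "\<dots> = real M / 2 powr lw" by simp
          finally show ?thesis .
        qed
        have sumNA: "(\<Sum>b\<in>UNIV. NA N b) = n"
        proof -
          have "(\<Sum>b\<in>UNIV. NA N b) = (\<Sum>x\<in>UNIV. \<Sum>b\<in>UNIV. N (x,b))"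
            unfolding NA_def by (rule sum.swap)
          also have "\<dots> = (\<Sum>s\<in>UNIV. N s)" by (rule sum_pair[symmetric])
          finally show ?thesis using sumN by simp
        qed
        have bound2: "real (card SN) \<le> real L / 2 powr lu"
        proof -
          define Acl where "Acl = {as::'a list. length as = n \<and> (\<forall>b. card {i\<in>{..<n}. as!i = b} = NA N b)}"
          have fA: "finite Acl" unfolding Acl_def
            by (rule finite_subset[OF _ lists_finite[of n]]) auto
          have fdec: "\<forall>as\<in>Acl. finite (dec as)"
            unfolding Acl_def using decp by (auto intro: finite_subset)
          have "SN \<subseteq> (\<lambda>(as, m). (m, as)) ` Sigma Acl dec"
          proof
            fix p assume "p \<in> SN"
            then obtain m as where p: "p = (m, as)" "m < M" "length as = n" "m \<in> dec as" "cnt n (enc m) as = N"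
              unfolding SN_def S_def g_def by auto
            have "as \<in> Acl" unfolding Acl_def using p cntA[of n as _ "enc m"] by auto
            then show "p \<in> (\<lambda>(as, m). (m, as)) ` Sigma Acl dec" using p by force
          qed
          then have "card SN \<le> card ((\<lambda>(as, m). (m, as)) ` Sigma Acl dec)"
            by (intro card_mono) (use fA fdec in auto)
          also have "\<dots> \<le> card (Sigma Acl dec)" by (rule card_image_le) (use fA fdec in auto)
          also have "\<dots> = (\<Sum>as\<in>Acl. card (dec as))" using fA fdec by simp
          also have "\<dots> = card Acl * L" using decp unfolding Acl_def by simp
          finally have c: "real (card SN) \<le> real (card Acl) * real L" by (simp add: of_nat_mult[symmetric] del: of_nat_mult)
          have "real (card Acl) * 2 powr lu \<le> 1" unfolding Acl_def lu_def
            by (rule classA_bound[OF n sumNA])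
          then have "real (card Acl) \<le> 1 / 2 powr lu" by (simp add: field_simps)
          then have "real (card Acl) * real L \<le> 1 / 2 powr lu * real L" by (intro mult_right_mono) simp_all
          with c show ?thesis by simp
        qed
        define V where "V = (\<lambda>x a. real (N (x,a)) / real n)"
        have jV: "joint_dist V"
        proof -
          have "(\<Sum>x\<in>UNIV. \<Sum>a\<in>UNIV. V x a) = (\<Sum>s\<in>UNIV. real (N s)) / real n"
            unfolding V_def by (simp add: sum_pair[of "\<lambda>s. real (N s)"] sum_divide_distrib)
          also have "\<dots> = 1" using sumN n by (simp add: of_nat_sum[symmetric] del: of_nat_sum)
          finally show ?thesis unfolding joint_dist_def V_def by simp
        qed
        define D where "D = (\<Sum>s\<in>UNIV. real (N s) * (log 2 (real (N s) / real (NX N (fst s))) - log 2 (P (fst s) (snd s)))) / real n"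
        have cd: "cond_div V P = ereal D" unfolding V_def D_def by (rule cond_div_V[OF n PN])
        have nD: "real n * D = lw - lp"
        proof -
          have "real n * D = (\<Sum>s\<in>UNIV. real (N s) * (log 2 (real (N s) / real (NX N (fst s))) - log 2 (P (fst s) (snd s))))"
            unfolding D_def using n by simp
          also have "\<dots> = lw - lp" unfolding lw_def lp_def
            by (simp add: right_diff_distrib sum_subtractf case_prod_unfold)
          finally show ?thesis .
        qed
        define I where "I = mutual_info V"
        have nI: "real n * I = lw - lu" unfolding I_def V_def lw_def lu_def by (rule mi_V[OF n])
        have "ereal (\<zeta> + e) < F V" by (rule low[OF jV])
        moreover have "F V = ereal (D + max (R - RL - I) 0)" unfolding F_def cd I_def by (simp only: plus_ereal.simps(1))
        ultimately have lt: "\<zeta> + e < D + max (R - RL - I) 0" by (simp only: less_ereal.simps(1))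
        have le: "sum Pn SN \<le> real M * 2 powr (- (real n * (D + max (R - RL - I) 0)))"
        proof (cases "R - RL - I \<le> 0")
          case True
          have "sum Pn SN \<le> real M / 2 powr lw * 2 powr lp"
            unfolding sumSN pN by (rule mult_right_mono[OF bound1]) simp
          also have "\<dots> = real M * 2 powr (lp - lw)" by (simp add: powr_diff)
          also have "lp - lw = - (real n * (D + max (R - RL - I) 0))" using True nD by simp
          finally show ?thesis .
        next
          case False
          have "sum Pn SN \<le> real L / 2 powr lu * 2 powr lp"
            unfolding sumSN pN by (rule mult_right_mono[OF bound2]) simp
          also have "\<dots> = 2 powr (real n * RL + lp - lu)" unfolding LR by (simp add: powr_diff powr_add)
          also have "real n * RL + lp - lu = real n * R + (- (real n * (D + max (R - RL - I) 0)))"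
          proof -
            have "real n * (D + max (R - RL - I) 0) = real n * D + real n * R - real n * RL - real n * I"
              using False by (simp add: algebra_simps)
            then show ?thesis using nD nI by linarith
          qed
          also have "2 powr (real n * R + (- (real n * (D + max (R - RL - I) 0))))
              = real M * 2 powr (- (real n * (D + max (R - RL - I) 0)))"
            unfolding MR by (rule powr_add)
          finally show ?thesis .
        qed
        also have "\<dots> < B" unfolding B_def
          using Mpos lt n by (intro mult_strict_left_mono powr_less_mono) simp_all
        finally show ?thesis unfolding SN_def .
      qed
    qed
  qed
  have "sum Pn S < (\<Sum>N\<in>NS. B)"
    unfolding step2 by (rule sum_strict_mono[OF finNS NSne step3])
  also have "(\<Sum>N\<in>NS. B) = real M * \<alpha>"
  proof -
    have ne: "real n * e = real CARD('x \<times> 'a) * log 2 (real n + 1)" unfolding e_def using n by simp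
    have pw: "2 powr (real CARD('x \<times> 'a) * log 2 (real n + 1)) = (real n + 1) ^ CARD('x \<times> 'a)"
      by (rule pw_lemma) simp
    have "(\<Sum>N\<in>NS. B) = real (card NS) * B" by simp
    also have "\<dots> = (real n + 1) ^ CARD('x \<times> 'a) * (real M * (2 powr (- (real n * \<zeta>)) / 2 powr (real n * e)))"
      unfolding cardNS B_def by (simp add: distrib_left powr_diff[symmetric] algebra_simps)
    also have "\<dots> = real M * \<alpha>" unfolding ne pw \<alpha>_def by simp
    finally show ?thesis .
  qed
  finally show False using step1 by simp
qed


theorem mainTheorem5:
  shows "\<exists>\<epsilon> :: nat \<Rightarrow> real. \<epsilon> \<longlonglongrightarrow> 0 \<and>
    (\<forall>P :: 'x::finite \<Rightarrow> 'a::finite \<Rightarrow> real. channel P \<longrightarrow>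
      (\<forall>(n::nat) (M::nat) (L::nat) (R::real) (RL::real) (\<zeta>::real)
          (enc :: nat \<Rightarrow> 'x list) (dec :: 'a list \<Rightarrow> nat set).
        1 \<le> n \<and> real M = 2 powr (real n * R) \<and> real L = 2 powr (real n * RL) \<and>
        list_code P n M L (2 powr (- (real n * \<zeta>))) enc dec \<longrightarrow>
        (INF Q\<in>{Q. joint_dist Q}. cond_div Q P + ereal (max (R - RL - mutual_info Q) 0))
          - ereal (\<epsilon> n) \<le> ereal \<zeta>))"
proof (intro exI conjI allI impI)
  show "(\<lambda>n. real CARD('x \<times> 'a) * log 2 (real n + 1) / real n) \<longlonglongrightarrow> 0"
    by real_asymp
next
  fix P :: "'x::finite \<Rightarrow> 'a::finite \<Rightarrow> real" and n M L R RL \<zeta> and enc :: "nat \<Rightarrow> 'x list" and dec :: "'a list \<Rightarrow> nat set"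
  assume "channel P" and H: "1 \<le> n \<and> real M = 2 powr (real n * R) \<and> real L = 2 powr (real n * RL) \<and>
        list_code P n M L (2 powr (- (real n * \<zeta>))) enc dec"
  then show "(INF Q\<in>{Q. joint_dist Q}. cond_div Q P + ereal (max (R - RL - mutual_info Q) 0))
          - ereal (real CARD('x \<times> 'a) * log 2 (real n + 1) / real n) \<le> ereal \<zeta>"
    using main_bound by blast
qed

end
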